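(* Let $k\ge1$ and $r\ge1$ be integers. Then for all sufficiently large $n$, $$\Delta^r(\Delta_k(n)):=\sum_{i=0}^{r}\binom{r}{i}(-1)^{r+i}\Delta_k(n+i)>0.$$
   Context: For an integer $k\ge1$, $\Delta_k(n)$ is defined by $\sum_{n\ge0}\Delta_k(n)q^n=\prod_{m\ge1}\frac{(1-q^{2m})(1-q^{(2k+1)m})}{(1-q^m)^3(1-q^{(4k+2)m})}$. *)

theory Defs
  imports "HOL-Computational_Algebra.Formal_Power_Series"
begin

definition Delta_factor :: "nat \<Rightarrow> nat \<Rightarrow> rat fps" where
  "Delta_factor k m =
     ((1 - fps_X ^ (2 * m)) * (1 - fps_X ^ ((2 * k + 1) * m))) /
     ((1 - fps_X ^ m) ^ 3 * (1 - fps_X ^ ((4 * k + 2) * m)))"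

text \<open>Coefficient of q^n in the infinite product over m \<ge> 1. Factors with m > n are
  congruent to 1 modulo q^(n+1), so truncating the product at m = n gives the
  coefficient of the infinite product exactly.\<close>
definition Delta :: "nat \<Rightarrow> nat \<Rightarrow> rat" where
  "Delta k n = fps_nth (\<Prod>m\<in>{1..n}. Delta_factor k m) n"

end

theory Submission
  imports Defs "HOL-Computational_Algebra.Computational_Algebra" "HOL-Computational_Algebra.Field_as_Ring"
begin


definition geo :: "nat \<Rightarrow> rat fps" where "geo m = Abs_fps (\<lambda>n. if m dvd n then 1 else 0)"

lemma geo_nth: "geo m $ n = (if m dvd n then 1 else 0)"
  by (simp add: geo_def)

lemma geo_inv: assumes "m \<ge> 1" shows "(1 - fps_X ^ m) * geo m = 1"
proof (rule fps_ext)
  fix n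
  have "((1 - fps_X ^ m) * geo m) $ n = geo m $ n - (fps_X ^ m * geo m) $ n"
    by (simp add: algebra_simps)
  also have "\<dots> = (if n = 0 then 1 else 0)"
    using assms by (auto simp: fps_X_power_mult_nth geo_nth dvd_minus_self
        dest: dvd_imp_le)
  finally show "((1 - fps_X ^ m) * geo m) $ n = (1::rat fps) $ n" by simp
qed

definition G :: "(nat \<Rightarrow> nat) \<Rightarrow> nat \<Rightarrow> rat fps" where
  "G e N = (\<Prod>m\<in>{1..N}. geo m ^ e m)"

definition nn :: "rat fps \<Rightarrow> bool" where "nn f \<longleftrightarrow> (\<forall>n. 0 \<le> f $ n)"
definition fle :: "rat fps \<Rightarrow> rat fps \<Rightarrow> bool" where "fle f g \<longleftrightarrow> (\<forall>n. f $ n \<le> g $ n)"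
definition incr :: "rat fps \<Rightarrow> bool" where "incr f \<longleftrightarrow> (\<forall>n. f $ n \<le> f $ Suc n)"

lemma nn_add: "nn f \<Longrightarrow> nn g \<Longrightarrow> nn (f + g)" by (simp add: nn_def)
lemma nn_mult: "nn f \<Longrightarrow> nn g \<Longrightarrow> nn (f * g)"
  unfolding nn_def fps_mult_nth by (auto intro!: sum_nonneg)
lemma nn_1: "nn 1" by (simp add: nn_def)
lemma nn_0: "nn 0" by (simp add: nn_def)
lemma nn_power: "nn f \<Longrightarrow> nn (f ^ k)" by (induction k) (auto intro: nn_mult nn_1)
lemma nn_prod: "(\<And>x. x \<in> A \<Longrightarrow> nn (f x)) \<Longrightarrow> nn (\<Prod>x\<in>A. f x)"
  by (induction A rule: infinite_finite_induct) (auto intro: nn_mult nn_1)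
lemma nn_sum: "(\<And>x. x \<in> A \<Longrightarrow> nn (f x)) \<Longrightarrow> nn (\<Sum>x\<in>A. f x)"
  by (induction A rule: infinite_finite_induct) (auto intro: nn_add nn_0)
lemma nn_geo: "nn (geo m)" by (simp add: nn_def geo_nth)
lemma nn_X: "nn (fps_X ^ k)" by (simp add: nn_def fps_X_power_nth)
lemma nn_const: "c \<ge> 0 \<Longrightarrow> nn (fps_const c)" by (simp add: nn_def)
lemma nn_of_nat: "nn (of_nat c)" by (simp add: nn_def fps_of_nat)
lemma nn_G: "nn (G e N)" unfolding G_def by (auto intro!: nn_prod nn_power nn_geo)

lemma fle_nn: "fle f g \<longleftrightarrow> nn (g - f)" by (simp add: fle_def nn_def)
lemma fle_refl: "fle f f" by (simp add: fle_def)
lemma fle_trans: "fle f g \<Longrightarrow> fle g h \<Longrightarrow> fle f h" unfolding fle_def by (meson order_trans)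
lemma fle_add: "fle a b \<Longrightarrow> fle c d \<Longrightarrow> fle (a + c) (b + d)" unfolding fle_def by (simp add: add_mono)
lemma fle_mult_left: "nn c \<Longrightarrow> fle a b \<Longrightarrow> fle (c * a) (c * b)"
  unfolding fle_nn by (metis nn_mult right_diff_distrib)
lemma fle_mult_right: "nn c \<Longrightarrow> fle a b \<Longrightarrow> fle (a * c) (b * c)"
  by (metis fle_mult_left mult.commute)
lemma fle_sum: "(\<And>x. x \<in> A \<Longrightarrow> fle (f x) (g x)) \<Longrightarrow> fle (\<Sum>x\<in>A. f x) (\<Sum>x\<in>A. g x)"
  unfolding fle_def fps_sum_nth by (auto intro: sum_mono)
lemma fle_nn_add: "nn c \<Longrightarrow> fle a (a + c)" by (simp add: fle_nn)
lemma fle_0: "fle 0 f \<longleftrightarrow> nn f" by (simp add: fle_nn)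

lemma fle_mult_mono: "nn a \<Longrightarrow> nn c \<Longrightarrow> fle a b \<Longrightarrow> fle c d \<Longrightarrow> fle (a * c) (b * d)"
proof -
  assume *: "nn a" "nn c" "fle a b" "fle c d"
  have "nn b" using * unfolding fle_def nn_def by (meson order_trans)
  have "fle (a * c) (b * c)" by (rule fle_mult_right) (use * in auto)
  moreover have "fle (b * c) (b * d)" by (rule fle_mult_left) (use * \<open>nn b\<close> in auto)
  ultimately show ?thesis by (rule fle_trans)
qed

lemma fle_prod: "(\<And>x. x \<in> A \<Longrightarrow> nn (f x)) \<Longrightarrow> (\<And>x. x \<in> A \<Longrightarrow> fle (f x) (g x))
   \<Longrightarrow> fle (\<Prod>x\<in>A. f x) (\<Prod>x\<in>A. g x)"
proof (induction A rule: infinite_finite_induct)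
  case (insert x F)
  then show ?case by (auto intro!: fle_mult_mono nn_prod)
qed (auto simp: fle_refl)


lemma G_Suc: "G e (Suc N) = G e N * geo (Suc N) ^ e (Suc N)"
  unfolding G_def by simp

lemma geo_pow_low: "i < m \<Longrightarrow> (geo m ^ j) $ i = (if i = 0 then 1 else 0)"
proof (induction j arbitrary: i)
  case 0 then show ?case by simp
next
  case (Suc j)
  have "(geo m ^ Suc j) $ i = (\<Sum>t=0..i. geo m $ t * (geo m ^ j) $ (i - t))"
    by (simp add: fps_mult_nth)
  also have "\<dots> = (\<Sum>t=0..i. if t = 0 then (geo m ^ j) $ i else 0)"
    using Suc.prems by (intro sum.cong) (auto simp: geo_nth dest: dvd_imp_le)
  also have "\<dots> = (geo m ^ j) $ i" by simp
  finally show ?case using Suc by simp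
qed

lemma mult_low: fixes f g :: "rat fps"
  assumes "\<And>t. 0 < t \<Longrightarrow> t \<le> n \<Longrightarrow> g $ t = 0" "g $ 0 = 1"
  shows "(f * g) $ n = f $ n"
proof -
  have "(f * g) $ n = (\<Sum>i=0..n. f $ i * g $ (n - i))" by (simp add: fps_mult_nth)
  also have "\<dots> = (\<Sum>i=0..n. if i = n then f $ n else 0)"
    using assms by (intro sum.cong) auto
  finally show ?thesis by simp
qed

lemma G_stable: "n \<le> N \<Longrightarrow> G e N $ n = G e n $ n"
proof (induction N rule: dec_induct)
  case (step N)
  have "G e (Suc N) $ n = (G e N * geo (Suc N) ^ e (Suc N)) $ n" by (simp add: G_Suc)
  also have "\<dots> = G e N $ n"
    by (rule mult_low) (use step in \<open>auto simp: geo_pow_low\<close>)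
  finally show ?case using step by simp
qed simp

lemma G_remove: assumes "1 \<le> b" "b \<le> N" "e b \<ge> 1"
  shows "(1 - fps_X ^ b) * G e N = G (e(b := e b - 1)) N"
proof -
  have b: "b \<in> {1..N}" using assms by auto
  have "G e N = geo b ^ e b * (\<Prod>m\<in>{1..N}-{b}. geo m ^ e m)"
    unfolding G_def by (rule prod.remove[OF _ b]) simp
  moreover have "G (e(b := e b - 1)) N = geo b ^ (e b - 1) * (\<Prod>m\<in>{1..N}-{b}. geo m ^ e m)"
    unfolding G_def by (subst prod.remove[OF _ b]) (auto intro!: prod.cong)
  moreover have "geo b ^ e b = geo b * geo b ^ (e b - 1)"
    using assms by (metis Suc_diff_le diff_Suc_1 power_Suc)
  ultimately show ?thesis using geo_inv[OF assms(1)] by (simp add: mult.assoc[symmetric])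
qed

definition sub :: "(nat \<Rightarrow> nat) \<Rightarrow> nat multiset \<Rightarrow> nat \<Rightarrow> nat" where
  "sub e T = (\<lambda>m. e m - count T m)"

lemma sub_empty[simp]: "sub e {#} = e" by (simp add: sub_def)
lemma sub_add: "sub (sub e A) B = sub e (A + B)" by (auto simp: sub_def fun_eq_iff)

lemma G_remove_mset:
  assumes "\<And>m. count T m \<le> e m" "\<And>b. b \<in># T \<Longrightarrow> 1 \<le> b \<and> b \<le> N"
  shows "(\<Prod>b\<in>#T. (1 - fps_X ^ b)) * G e N = G (sub e T) N"
  using assms
proof (induction T)
  case empty then show ?case by simp
next
  case (add b T)
  have IH: "(\<Prod>b\<in>#T. (1 - fps_X ^ b)) * G e N = G (sub e T) N"
    apply (rule add.IH)
    using add.prems(1) apply (metis count_add_mset le_SucI order_trans not_le order.refl le_eq_less_or_eq count_add_mset)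
    using add.prems(2) by auto
  have c: "count T b + 1 \<le> e b" using add.prems(1)[of b] by simp
  have "(\<Prod>b\<in>#add_mset b T. (1 - fps_X ^ b)) * G e N = (1 - fps_X ^ b) * G (sub e T) N"
    using IH by (simp add: mult.assoc)
  also have "\<dots> = G ((sub e T)(b := sub e T b - 1)) N"
    by (rule G_remove) (use add.prems(2)[of b] c in \<open>auto simp: sub_def\<close>)
  also have "(sub e T)(b := sub e T b - 1) = sub e (add_mset b T)"
    by (auto simp: sub_def fun_eq_iff)
  finally show ?case .
qed

lemma nth_one_minus_X_mult: "((1 - fps_X) * (f::rat fps)) $ Suc n = f $ Suc n - f $ n"
  by (simp add: algebra_simps fps_X_mult_nth)

lemma incr_G: assumes "e 1 \<ge> 1" "N \<ge> 1" shows "incr (G e N)"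
  unfolding incr_def
proof
  fix n
  have "(1 - fps_X) * G e N = G (e(1 := e 1 - 1)) N"
    using G_remove[of 1 N e] assms by simp
  then have "0 \<le> ((1 - fps_X) * G e N) $ Suc n" using nn_G unfolding nn_def by metis
  then show "G e N $ n \<le> G e N $ Suc n" by (simp add: nth_one_minus_X_mult)
qed

lemma incr_mono: "incr f \<Longrightarrow> i \<le> n \<Longrightarrow> f $ i \<le> f $ n"
  unfolding incr_def by (rule lift_Suc_mono_le[where f = "\<lambda>n. f $ n"]) auto

definition qsum :: "nat \<Rightarrow> rat fps" where "qsum b = (\<Sum>i<b. fps_X ^ i)"

lemma qsum_nth_mult: "(qsum b * f) $ n = (\<Sum>i<b. if i \<le> n then f $ (n - i) else 0)"
  unfolding qsum_def by (simp add: sum_distrib_right fps_sum_nth fps_X_power_mult_nth) (intro sum.cong refl, auto)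

lemma one_minus_X_power: "1 - fps_X ^ b = (1 - fps_X) * qsum b"
  unfolding qsum_def by (rule one_diff_power_eq)

lemma G_dec_qsum: assumes "e b \<ge> 1" "e 1 \<ge> 1" "1 \<le> b" "b \<le> N"
  shows "G (e(b := e b - 1)) N = qsum b * G (e(1 := e 1 - 1)) N"
proof -
  have "G (e(b := e b - 1)) N = (1 - fps_X ^ b) * G e N" using G_remove assms by simp
  also have "\<dots> = qsum b * ((1 - fps_X) * G e N)" by (simp add: one_minus_X_power mult_ac)
  also have "(1 - fps_X) * G e N = G (e(1 := e 1 - 1)) N" using G_remove[of 1 N e] assms by simp
  finally show ?thesis .
qed

lemma qsum_upper: assumes "incr f" "nn f" shows "(qsum b * f) $ n \<le> of_nat b * f $ n"
proof -
  have "(qsum b * f) $ n \<le> (\<Sum>i<b. f $ n)"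
    unfolding qsum_nth_mult using assms
    by (intro sum_mono) (auto simp: nn_def intro: incr_mono)
  then show ?thesis by simp
qed

lemma qsum_lower: assumes "nn f" "b \<ge> 1" shows "f $ n \<le> (qsum b * f) $ n"
proof -
  have "(qsum b * f) $ n = (\<Sum>i\<in>{0} \<union> {1..<b}. if i \<le> n then f $ (n - i) else 0)"
    unfolding qsum_nth_mult using assms(2) by (intro sum.cong) auto
  also have "\<dots> = f $ n + (\<Sum>i\<in>{1..<b}. if i \<le> n then f $ (n - i) else 0)"
    by (subst sum.union_disjoint) auto
  also have "\<dots> \<ge> f $ n" using assms(1) by (intro add_increasing2 sum_nonneg) (auto simp: nn_def)
  finally show ?thesis .
qed

lemma exch_step:
  assumes "e 1 \<ge> 2" "e b \<ge> 1" "e c \<ge> 1" "1 \<le> b" "b \<le> N" "1 \<le> c" "c \<le> N"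
  shows "G (e(b := e b - 1)) N $ n \<le> of_nat b * G (e(c := e c - 1)) N $ n"
proof -
  define F where "F = G (e(1 := e 1 - 1)) N"
  have iF: "incr F" unfolding F_def by (rule incr_G) (use assms in auto)
  have nF: "nn F" unfolding F_def by (rule nn_G)
  have 1: "G (e(b := e b - 1)) N = qsum b * F"
    unfolding F_def using G_dec_qsum assms by (metis le_trans one_le_numeral)
  have 2: "qsum c * F = G (e(c := e c - 1)) N"
    unfolding F_def using G_dec_qsum assms by (metis le_trans one_le_numeral)
  have "(qsum b * F) $ n \<le> of_nat b * F $ n" by (rule qsum_upper[OF iF nF])
  also have "\<dots> \<le> of_nat b * (qsum c * F) $ n"
    by (rule mult_left_mono[OF qsum_lower[OF nF assms(6)]]) simp
  finally show ?thesis unfolding 1 2 .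
qed


lemma sub_single: "sub e {#b#} = e(b := e b - 1)"
  by (auto simp: sub_def fun_eq_iff)

lemma exch_chain:
  assumes "size T = size T'" "e 1 \<ge> 3" "1 \<notin># T" "count T' 1 \<le> 1"
    "\<And>m. m \<ge> 2 \<Longrightarrow> count T m + count T' m \<le> e m"
    "\<And>b. b \<in># T \<Longrightarrow> 1 \<le> b \<and> b \<le> N" "\<And>c. c \<in># T' \<Longrightarrow> 1 \<le> c \<and> c \<le> N"
  shows "G (sub e T) N $ n \<le> of_nat (\<Prod>b\<in>#T. b) * G (sub e T') N $ n"
  using assms
proof (induction T arbitrary: e T')
  case empty
  then show ?case by simp
next
  case (add b T0)
  from add.prems(1) obtain c T0' where T': "T' = add_mset c T0'"
    by (metis size_empty size_add_mset nat.distinct(1) multiset_cases)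
  have b1: "b \<noteq> 1" using add.prems(3) by auto
  have bN: "1 \<le> b" "b \<le> N" using add.prems(6)[of b] by auto
  have cN: "1 \<le> c" "c \<le> N" using add.prems(7)[of c] T' by auto
  have b2: "b \<ge> 2" using b1 bN by auto
  define e'' where "e'' = sub e {#b#}"
  define Y where "Y = sub e T0'"
  have IH: "G (sub e'' T0) N $ n \<le> of_nat (\<Prod>b\<in>#T0. b) * G (sub e'' T0') N $ n"
  proof (rule add.IH)
    show "size T0 = size T0'" using add.prems(1) T' by simp
    show "e'' 1 \<ge> 3" using add.prems(2) b1 by (simp add: e''_def sub_def)
    show "1 \<notin># T0" using add.prems(3) by auto
    show "count T0' 1 \<le> 1" using add.prems(4) T' by (auto split: if_splits)
    show "count T0 m + count T0' m \<le> e'' m" if "m \<ge> 2" for m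
      using add.prems(5)[OF that] T' by (auto simp: e''_def sub_def split: if_splits)
    show "1 \<le> x \<and> x \<le> N" if "x \<in># T0" for x using add.prems(6) that by auto
    show "1 \<le> x \<and> x \<le> N" if "x \<in># T0'" for x using add.prems(7) that T' by auto
  qed
  have e1: "sub e (add_mset b T0) = sub e'' T0"
    unfolding e''_def sub_add by simp
  have e2: "sub e'' T0' = Y(b := Y b - 1)"
    unfolding e''_def Y_def sub_add sub_single[symmetric] by (simp add: add.commute)
  have e3: "Y(c := Y c - 1) = sub e T'"
    unfolding Y_def sub_single[symmetric] sub_add T' by simp
  have cb: "count (add_mset b T0) b + count T' b \<le> e b" using add.prems(5)[OF b2] .
  have step: "G (Y(b := Y b - 1)) N $ n \<le> of_nat b * G (Y(c := Y c - 1)) N $ n"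
  proof (rule exch_step)
    show "Y 1 \<ge> 2" using add.prems(2,4) T' by (auto simp: Y_def sub_def split: if_splits)
    show "Y b \<ge> 1" using cb T' by (auto simp: Y_def sub_def split: if_splits)
    show "Y c \<ge> 1"
    proof (cases "c = 1")
      case True then show ?thesis using add.prems(2,4) T' by (auto simp: Y_def sub_def)
    next
      case False
      then have "c \<ge> 2" using cN by auto
      from add.prems(5)[OF this] show ?thesis using T' by (auto simp: Y_def sub_def)
    qed
  qed (use bN cN in auto)
  have "G (sub e (add_mset b T0)) N $ n \<le> of_nat (\<Prod>b\<in>#T0. b) * G (sub e'' T0') N $ n"
    using IH e1 by simp
  also have "\<dots> \<le> of_nat (\<Prod>b\<in>#T0. b) * (of_nat b * G (sub e T') N $ n)"
    by (rule mult_left_mono) (use step e2 e3 in auto)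
  finally show ?case by (simp add: mult_ac)
qed


lemma nn_X_mult: "nn f \<Longrightarrow> nn (fps_X ^ a * f)"
  by (intro nn_mult nn_X)

lemma incr_X_mult: assumes "nn f" "incr f" shows "incr (fps_X ^ a * f)"
  using assms unfolding incr_def nn_def
  by (auto simp: fps_X_power_mult_nth not_less Suc_diff_le)

lemma shift_le: assumes "nn f" "incr f" shows "fle (fps_X ^ a * f) f"
  using assms unfolding fle_def nn_def
  by (auto simp: fps_X_power_mult_nth intro: incr_mono[OF assms(2)])

lemma fle_sum_subset: assumes "finite B" "A \<subseteq> B" "\<And>x. x \<in> B \<Longrightarrow> nn (f x)"
  shows "fle (\<Sum>x\<in>A. f x) (\<Sum>x\<in>B. f x)"
  using assms unfolding fle_def fps_sum_nth nn_def by (auto intro!: sum_mono2)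

lemma fle_const_mult: "c \<ge> 0 \<Longrightarrow> fle a b \<Longrightarrow> fle (of_nat k * a) (of_nat k * b)"
  by (rule fle_mult_left) (simp_all add: nn_of_nat)

lemma nn_numeral: "nn (numeral c :: rat fps)"
  by (simp add: nn_def numeral_fps_const)

lemma nn_diff_pow_cases:
  fixes z :: "rat fps"
  assumes "nn z" "1 \<le> k" "k \<le> 3"
  shows "nn ((1 + z) ^ k - 1 - z * (1 + z) ^ (k - 1))"
    and "nn (3 * (z * (1 + z) ^ (k - 1)) - ((1 + z) ^ k - 1))"
proof -
  have nz2: "nn (z^2)" "nn (z^3)" using assms(1) by (auto intro: nn_power)
  have "k = 1 \<or> k = 2 \<or> k = 3" using assms by auto
  then show "nn ((1 + z) ^ k - 1 - z * (1 + z) ^ (k - 1))"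
  proof (elim disjE)
    assume "k = 2"
    then have "(1 + z) ^ k - 1 - z * (1 + z) ^ (k - 1) = z" by (simp add: algebra_simps power2_eq_square)
    then show ?thesis using assms by simp
  next
    assume "k = 3"
    then have "(1 + z) ^ k - 1 - z * (1 + z) ^ (k - 1) = z + z + z^2"
      by (simp add: algebra_simps power2_eq_square power3_eq_cube)
    then show ?thesis using assms nz2 by (simp add: nn_add nn_mult nn_numeral)
  qed (simp add: nn_0)
  show "nn (3 * (z * (1 + z) ^ (k - 1)) - ((1 + z) ^ k - 1))"
    using \<open>k = 1 \<or> k = 2 \<or> k = 3\<close>
  proof (elim disjE)
    assume "k = 1"
    then have "3 * (z * (1 + z) ^ (k - 1)) - ((1 + z) ^ k - 1) = z + z" by (simp add: algebra_simps)
    then show ?thesis using assms by (simp add: nn_add nn_mult nn_numeral)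
  next
    assume "k = 2"
    then have "3 * (z * (1 + z) ^ (k - 1)) - ((1 + z) ^ k - 1) = z + z^2 + z^2"
      by (simp add: algebra_simps power2_eq_square)
    then show ?thesis using assms nz2 by (simp add: nn_add nn_mult nn_numeral)
  next
    assume "k = 3"
    then have "3 * (z * (1 + z) ^ (k - 1)) - ((1 + z) ^ k - 1) = z^2 + z^2 + z^2 + z^3 + z^3"
      by (simp add: algebra_simps power2_eq_square power3_eq_cube)
    then show ?thesis using assms nz2 by (simp add: nn_add nn_mult nn_numeral)
  qed
qed

lemma A_bounds:
  assumes "1 \<le> e (Suc t)" "e (Suc t) \<le> 3"
  shows "fle (fps_X ^ Suc t * G e (Suc t)) (G e (Suc t) - G e t)"
    and "fle (G e (Suc t) - G e t) (3 * (fps_X ^ Suc t * G e (Suc t)))"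
proof -
  define y where "y = geo (Suc t)"
  define z where "z = fps_X ^ Suc t * y"
  define k where "k = e (Suc t)"
  have yz: "y = 1 + z" using geo_inv[of "Suc t"] unfolding y_def z_def by (simp add: algebra_simps)
  have nz: "nn z" unfolding z_def y_def by (intro nn_X_mult nn_geo)
  have k: "1 \<le> k" "k \<le> 3" using assms by (auto simp: k_def)
  have H: "G e (Suc t) = G e t * y ^ k" by (simp add: G_Suc y_def k_def)
  have yk: "y ^ k = y * y ^ (k - 1)" using k by (metis Suc_diff_le diff_Suc_1 power_Suc)
  have "fps_X ^ Suc t * G e (Suc t) = G e t * ((fps_X ^ Suc t * y) * y ^ (k - 1))"
    unfolding H yk by (simp only: mult_ac)
  then have 1: "fps_X ^ Suc t * G e (Suc t) = G e t * (z * (1 + z) ^ (k - 1))"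
    unfolding z_def[symmetric] yz[symmetric] .
  have 2: "G e (Suc t) - G e t = G e t * ((1 + z) ^ k - 1)"
    unfolding H yz[symmetric] by (simp add: right_diff_distrib)
  show "fle (fps_X ^ Suc t * G e (Suc t)) (G e (Suc t) - G e t)"
    unfolding fle_nn 1 2 using nn_mult[OF nn_G nn_diff_pow_cases(1)[OF nz k]]
    by (simp add: algebra_simps)
  show "fle (G e (Suc t) - G e t) (3 * (fps_X ^ Suc t * G e (Suc t)))"
    unfolding fle_nn 1 2 using nn_mult[OF nn_G nn_diff_pow_cases(2)[OF nz k], of e t]
    by (simp add: algebra_simps)
qed


locale mult13 =
  fixes e :: "nat \<Rightarrow> nat"
  assumes e13: "\<And>m. 1 \<le> m \<Longrightarrow> 1 \<le> e m \<and> e m \<le> 3"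
begin

lemma incr_H: "s \<ge> 1 \<Longrightarrow> incr (G e s)"
  by (rule incr_G) (use e13[of 1] in auto)

lemma A_lo: "s \<ge> 1 \<Longrightarrow> fle (fps_X ^ s * G e s) (G e s - G e (s - 1))"
  using A_bounds(1)[of e "s - 1"] e13[of s] by simp

lemma A_hi: "s \<ge> 1 \<Longrightarrow> fle (G e s - G e (s - 1)) (3 * (fps_X ^ s * G e s))"
  using A_bounds(2)[of e "s - 1"] e13[of s] by simp

lemma tele: "G e (t + K) = G e t + (\<Sum>i\<in>{1..K}. G e (t + i) - G e (t + i - 1))"
  by (induction K) auto

lemma nn_XG: "nn (fps_X ^ s * G e s)" by (intro nn_X_mult nn_G)

lemma H4: "fle (\<Sum>s=0..M. fps_X ^ s * G e s) (G e M)"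
proof (induction M)
  case 0 then show ?case by (simp add: G_def fle_refl)
next
  case (Suc M)
  have "fle (\<Sum>s=0..Suc M. fps_X ^ s * G e s) (G e M + (G e (Suc M) - G e M))"
    using fle_add[OF Suc A_lo[of "Suc M"]] by simp
  then show ?case by simp
qed

lemma H3: assumes "L \<ge> 1"
  shows "fle (\<Sum>t=0..T. fps_X ^ t * G e (t + L))
             (of_nat (1 + 3 * L) * (\<Sum>s=0..T+L. fps_X ^ s * G e s))"
proof -
  define S where "S = (\<Sum>s=0..T+L. fps_X ^ s * G e s)"
  have bnd: "fle (fps_X ^ t * G e (t + L))
      (fps_X ^ t * G e t + 3 * (\<Sum>i\<in>{1..L}. fps_X ^ (t + i) * G e (t + i)))" for t
  proof -
    have "fle (G e (t + L)) (G e t + (\<Sum>i\<in>{1..L}. 3 * (fps_X ^ (t + i) * G e (t + i))))"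
    proof -
      have "fle (\<Sum>i\<in>{1..L}. G e (t + i) - G e (t + i - 1))
                (\<Sum>i\<in>{1..L}. 3 * (fps_X ^ (t + i) * G e (t + i)))"
        by (rule fle_sum) (rule A_hi, auto)
      from fle_add[OF fle_refl[of "G e t"] this] show ?thesis by (simp only: tele[symmetric])
    qed
    then have "fle (fps_X ^ t * G e (t + L))
       (fps_X ^ t * (G e t + (\<Sum>i\<in>{1..L}. 3 * (fps_X ^ (t + i) * G e (t + i)))))"
      by (rule fle_mult_left[OF nn_X])
    also have "fps_X ^ t * (G e t + (\<Sum>i\<in>{1..L}. 3 * (fps_X ^ (t + i) * G e (t + i))))
        = fps_X ^ t * G e t + 3 * (\<Sum>i\<in>{1..L}. fps_X ^ t * (fps_X ^ (t + i) * G e (t + i)))"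
      by (simp add: algebra_simps sum_distrib_left)
    finally have 1: "fle (fps_X ^ t * G e (t + L))
       (fps_X ^ t * G e t + 3 * (\<Sum>i\<in>{1..L}. fps_X ^ t * (fps_X ^ (t + i) * G e (t + i))))" .
    have 2: "fle (\<Sum>i\<in>{1..L}. fps_X ^ t * (fps_X ^ (t + i) * G e (t + i)))
                 (\<Sum>i\<in>{1..L}. fps_X ^ (t + i) * G e (t + i))"
      by (rule fle_sum, rule shift_le) (auto intro!: nn_XG incr_X_mult nn_G incr_H)
    have 3: "fle (3 * (\<Sum>i\<in>{1..L}. fps_X ^ t * (fps_X ^ (t + i) * G e (t + i))))
                 (3 * (\<Sum>i\<in>{1..L}. fps_X ^ (t + i) * G e (t + i)))"
      by (rule fle_mult_left[OF nn_numeral 2])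
    show ?thesis by (rule fle_trans[OF 1 fle_add[OF fle_refl 3]])
  qed
  have sum1: "fle (\<Sum>t=0..T. fps_X ^ t * G e (t + L))
     ((\<Sum>t=0..T. fps_X ^ t * G e t) + 3 * (\<Sum>i\<in>{1..L}. \<Sum>t=0..T. fps_X ^ (t + i) * G e (t + i)))"
  proof -
    have "fle (\<Sum>t=0..T. fps_X ^ t * G e (t + L))
      (\<Sum>t=0..T. fps_X ^ t * G e t + 3 * (\<Sum>i\<in>{1..L}. fps_X ^ (t + i) * G e (t + i)))"
      by (rule fle_sum[OF bnd])
    also have "(\<Sum>t=0..T. fps_X ^ t * G e t + 3 * (\<Sum>i\<in>{1..L}. fps_X ^ (t + i) * G e (t + i)))
      = (\<Sum>t=0..T. fps_X ^ t * G e t) + 3 * (\<Sum>i\<in>{1..L}. \<Sum>t=0..T. fps_X ^ (t + i) * G e (t + i))"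
      by (simp add: sum.distrib sum_distrib_left) (subst sum.swap, simp add: add.commute)
    finally show ?thesis .
  qed
  have s1: "fle (\<Sum>t=0..T. fps_X ^ t * G e t) S"
    unfolding S_def by (rule fle_sum_subset) (auto intro: nn_XG)
  have s2: "fle (\<Sum>t=0..T. fps_X ^ (t + i) * G e (t + i)) S" if "i \<in> {1..L}" for i
  proof -
    have "(\<Sum>t=0..T. fps_X ^ (t + i) * G e (t + i)) = (\<Sum>s\<in>(\<lambda>t. t + i) ` {0..T}. fps_X ^ s * G e s)"
      by (subst sum.reindex) (auto simp: inj_on_def)
    also have "fle \<dots> S" unfolding S_def using that by (intro fle_sum_subset) (auto intro: nn_XG)
    finally show ?thesis .
  qed
  have "fle (\<Sum>i\<in>{1..L}. \<Sum>t=0..T. fps_X ^ (t + i) * G e (t + i)) (\<Sum>i\<in>{1..L}. S)"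
    by (rule fle_sum[OF s2])
  then have s3: "fle (3 * (\<Sum>i\<in>{1..L}. \<Sum>t=0..T. fps_X ^ (t + i) * G e (t + i))) (3 * (of_nat L * S))"
    by (intro fle_mult_left[OF nn_numeral]) simp
  have "fle (\<Sum>t=0..T. fps_X ^ t * G e (t + L)) (S + 3 * (of_nat L * S))"
    by (rule fle_trans[OF sum1 fle_add[OF s1 s3]])
  also have "S + 3 * (of_nat L * S) = of_nat (1 + 3 * L) * S" by (simp add: algebra_simps)
  finally show ?thesis unfolding S_def .
qed

end


declare fle_trans[trans]

lemma of_nat_fps_mult_nth: "(of_nat c * f :: rat fps) $ n = of_nat c * f $ n"
  by (simp add: fps_of_nat[symmetric])

context mult13
begin

lemma H5: assumes "1 \<le> L" "L \<le> N"
  shows "fle (G e N - G e (L - 1)) (of_nat (3 * (1 + 3 * L)) * (fps_X ^ L * G e N))"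
proof -
  define t0 where "t0 = L - 1"
  define K where "K = N - t0"
  have K1: "K \<ge> 1" and NK: "N = t0 + K" and Lt: "L = Suc t0" using assms by (auto simp: t0_def K_def)
  have "G e N - G e t0 = (\<Sum>i\<in>{1..K}. G e (t0 + i) - G e (t0 + i - 1))"
    using tele[of t0 K] NK by simp
  also have "fle \<dots> (\<Sum>i\<in>{1..K}. 3 * (fps_X ^ (t0 + i) * G e (t0 + i)))"
    by (rule fle_sum) (rule A_hi, auto)
  also have "(\<Sum>i\<in>{1..K}. 3 * (fps_X ^ (t0 + i) * G e (t0 + i)))
      = 3 * (fps_X ^ L * (\<Sum>j=0..K-1. fps_X ^ j * G e (j + L)))"
  proof -
    have "(\<Sum>i\<in>{1..K}. 3 * (fps_X ^ (t0 + i) * G e (t0 + i)))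
        = (\<Sum>j\<in>{0..K-1}. 3 * (fps_X ^ (t0 + Suc j) * G e (t0 + Suc j)))"
      using K1 sum.shift_bounds_cl_Suc_ivl[of "\<lambda>i. 3 * (fps_X ^ (t0 + i) * G e (t0 + i))" 0 "K - 1"]
      by simp
    also have "\<dots> = (\<Sum>j\<in>{0..K-1}. 3 * (fps_X ^ L * (fps_X ^ j * G e (j + L))))"
      by (intro sum.cong refl) (simp add: Lt power_add mult_ac add_ac)
    finally show ?thesis by (simp add: sum_distrib_left)
  qed
  also have "fle (3 * (fps_X ^ L * (\<Sum>j=0..K-1. fps_X ^ j * G e (j + L))))
     (3 * (fps_X ^ L * (of_nat (1 + 3 * L) * (\<Sum>s=0..K-1+L. fps_X ^ s * G e s))))"
    by (intro fle_mult_left[OF nn_numeral] fle_mult_left[OF nn_X] H3 assms)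
  also have "K - 1 + L = N" using NK Lt K1 by simp
  also have "fle (3 * (fps_X ^ L * (of_nat (1 + 3 * L) * (\<Sum>s=0..N. fps_X ^ s * G e s))))
                 (3 * (fps_X ^ L * (of_nat (1 + 3 * L) * G e N)))"
    by (intro fle_mult_left[OF nn_numeral] fle_mult_left[OF nn_X] fle_mult_left[OF nn_of_nat] H4)
  also have "3 * (fps_X ^ L * (of_nat (1 + 3 * L) * G e N)) = of_nat (3 * (1 + 3 * L)) * (fps_X ^ L * G e N)"
    by (simp add: algebra_simps)
  finally show ?thesis unfolding t0_def .
qed

lemma largest_part: assumes "1 \<le> L" "L \<le> n"
  shows "G e n $ n \<le> G e (L - 1) $ n + of_nat (3 * (1 + 3 * L)) * G e (n - L) $ (n - L)"
proof -
  define c where "c = 3 * (1 + 3 * L)"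
  have "(G e n - G e (L - 1)) $ n \<le> (of_nat c * (fps_X ^ L * G e n)) $ n"
    using H5[OF assms] unfolding fle_def c_def by blast
  then have "G e n $ n - G e (L - 1) $ n \<le> of_nat c * G e n $ (n - L)"
    using assms by (simp only: of_nat_fps_mult_nth fps_X_power_mult_nth fps_sub_nth) (simp add: not_less)
  moreover have "G e n $ (n - L) = G e (n - L) $ (n - L)" by (rule G_stable) simp
  ultimately show ?thesis unfolding c_def by simp
qed

end


definition pbound :: "rat fps \<Rightarrow> nat \<Rightarrow> bool" where
  "pbound f k \<longleftrightarrow> nn f \<and> (\<forall>n. f $ n \<le> (of_nat n + 1) ^ k)"

lemma pbound_mult_geo: assumes "pbound f k" shows "pbound (f * geo m) (Suc k)"
  unfolding pbound_def
proof (intro conjI allI)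
  show "nn (f * geo m)" using assms by (auto simp: pbound_def intro: nn_mult nn_geo)
  fix n
  have "(f * geo m) $ n = (\<Sum>i=0..n. f $ i * geo m $ (n - i))" by (simp add: fps_mult_nth)
  also have "\<dots> \<le> (\<Sum>i=0..n. (of_nat n + 1) ^ k)"
  proof (rule sum_mono)
    fix i assume i: "i \<in> {0..n}"
    have "f $ i * geo m $ (n - i) \<le> f $ i" using assms by (auto simp: geo_nth pbound_def nn_def)
    also have "\<dots> \<le> (of_nat i + 1) ^ k" using assms by (auto simp: pbound_def)
    also have "\<dots> \<le> (of_nat n + 1) ^ k" using i by (intro power_mono) auto
    finally show "f $ i * geo m $ (n - i) \<le> (of_nat n + 1) ^ k" .
  qed
  also have "\<dots> = (of_nat n + 1) ^ Suc k" by simp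
  finally show "(f * geo m) $ n \<le> (of_nat n + 1) ^ Suc k" .
qed

lemma pbound_mult_geo_pow: "pbound f k \<Longrightarrow> pbound (f * geo m ^ j) (k + j)"
proof (induction j)
  case (Suc j)
  then have "pbound (f * geo m ^ j * geo m) (Suc (k + j))" by (intro pbound_mult_geo) auto
  then show ?case by (simp add: mult_ac)
qed simp

lemma pbound_G: "pbound (G e M) (\<Sum>m\<in>{1..M}. e m)"
proof (induction M)
  case 0 then show ?case by (simp add: G_def pbound_def nn_def)
next
  case (Suc M)
  show ?case using pbound_mult_geo_pow[OF Suc, of "Suc M" "e (Suc M)"] by (simp add: G_Suc)
qed

lemma G_poly_upper: assumes "(\<Sum>m\<in>{1..M}. e m) \<le> D"
  shows "G e M $ n \<le> (of_nat n + 1) ^ D"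
proof -
  have "G e M $ n \<le> (of_nat n + 1) ^ (\<Sum>m\<in>{1..M}. e m)" using pbound_G unfolding pbound_def by blast
  also have "\<dots> \<le> (of_nat n + 1) ^ D" by (rule power_increasing[OF assms]) simp
  finally show ?thesis .
qed

lemma fle_one_iff: "fle 1 g \<longleftrightarrow> nn g \<and> g $ 0 \<ge> 1"
  unfolding fle_def nn_def
proof safe
  assume h: "\<forall>n. (1::rat fps) $ n \<le> g $ n"
  show "1 \<le> g $ 0" using h[rule_format, of 0] by simp
  show "0 \<le> g $ n" for n using h[rule_format, of n] by (auto simp: fps_one_nth split: if_splits)
next
  fix n assume "\<forall>n. 0 \<le> g $ n" "1 \<le> g $ 0"
  then show "(1::rat fps) $ n \<le> g $ n" by (auto simp: fps_one_nth)
qed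

lemma fle_mult_ge1: assumes "nn f" "fle 1 g" shows "fle f (f * g)"
  using fle_mult_left[OF assms(1) assms(2)] by simp

lemma geo_pow_ge1: "m \<ge> 1 \<Longrightarrow> fle 1 (geo m ^ j)"
  unfolding fle_one_iff by (auto intro: nn_power nn_geo simp: geo_pow_low)

lemma geo_le_pow: assumes "m \<ge> 1" "j \<ge> 1" shows "fle (geo m) (geo m ^ j)"
proof -
  have "geo m ^ j = geo m * geo m ^ (j - 1)" using assms by (metis Suc_diff_le diff_Suc_1 power_Suc)
  then show ?thesis using fle_mult_ge1[OF nn_geo geo_pow_ge1[OF assms(1)]] by simp
qed

lemma G_ge_prod: assumes "\<And>m. 1 \<le> m \<Longrightarrow> e m \<ge> 1" "T \<le> N"
  shows "fle (\<Prod>m\<in>{1..T}. geo m) (G e N)"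
proof -
  have "(\<Prod>m\<in>{1..T}. geo m) = (\<Prod>m\<in>{1..N}. if m \<le> T then geo m else 1)"
  proof -
    have "{m\<in>{1..N}. m \<le> T} = {1..T}" using assms(2) by auto
    then show ?thesis using prod.inter_filter[of "{1..N}" geo "\<lambda>m. m \<le> T"] by simp
  qed
  also have "fle \<dots> (G e N)" unfolding G_def
  proof (rule fle_prod)
    fix m assume m: "m \<in> {1..N}"
    show "nn (if m \<le> T then geo m else 1)" by (auto intro: nn_geo nn_1)
    show "fle (if m \<le> T then geo m else 1) (geo m ^ e m)"
      using m assms(1)[of m] by (auto intro: geo_le_pow geo_pow_ge1)
  qed
  finally show ?thesis .
qed

lemma geo_dvd_le: "m dvd c \<Longrightarrow> fle (geo c) (geo m)"
  unfolding fle_def geo_nth by (auto intro: dvd_trans)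

lemma prod_geo_ge: assumes "c = fact (Suc T)"
  shows "fle (geo 1 * geo c ^ T) (\<Prod>m\<in>{1..Suc T}. geo m)"
proof -
  have "{1..Suc T} = insert 1 {2..Suc T}" by auto
  then have "(\<Prod>m\<in>{1..Suc T}. geo m) = geo 1 * (\<Prod>m\<in>{2..Suc T}. geo m)" by simp
  moreover have "fle (\<Prod>m\<in>{2..Suc T}. geo c) (\<Prod>m\<in>{2..Suc T}. geo m)"
    by (rule fle_prod) (auto simp: assms simp del: fact_Suc intro!: nn_geo geo_dvd_le dvd_fact)
  moreover have "(\<Prod>m\<in>{2..Suc T}. geo c) = geo c ^ T" by simp
  ultimately show ?thesis by (metis fle_mult_left nn_geo)
qed

lemma w_lower: assumes "c \<ge> 1"
  shows "of_nat (((n div c) div 2 ^ T) ^ T) \<le> (geo 1 * geo c ^ T) $ n"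
proof (induction T arbitrary: n)
  case 0 then show ?case by (simp add: fps_mult_nth geo_nth)
next
  case (Suc T)
  define x where "x = n div c"
  define w where "w = geo 1 * geo c ^ T"
  have "(geo 1 * geo c ^ Suc T) = w * geo c" by (simp add: w_def mult_ac)
  then have s1: "(geo 1 * geo c ^ Suc T) $ n = (\<Sum>i=0..n. w $ i * geo c $ (n - i))"
    by (simp only: fps_mult_nth)
  have s2: "(\<Sum>i=0..n. w $ i * geo c $ (n - i)) \<ge> (\<Sum>i\<in>(\<lambda>j. n - j * c) ` {0..x div 2}. w $ i * geo c $ (n - i))"
  proof (rule sum_mono2)
    show "(\<lambda>j. n - j * c) ` {0..x div 2} \<subseteq> {0..n}" by auto
    show "0 \<le> w $ i * geo c $ (n - i)" for i
      using nn_mult[OF nn_geo nn_power[OF nn_geo]] by (auto simp: w_def geo_nth nn_def)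
  qed simp
  have s3: "(\<Sum>i\<in>(\<lambda>j. n - j * c) ` {0..x div 2}. w $ i * geo c $ (n - i))
      = (\<Sum>j\<in>{0..x div 2}. w $ (n - j * c))"
  proof (subst sum.reindex)
    have "j * c \<le> n" if "j \<le> x div 2" for j
    proof -
      have "j * c \<le> x * c" using that by (intro mult_right_mono) auto
      also have "x * c \<le> n" by (simp add: x_def)
      finally show ?thesis .
    qed
    then show "inj_on (\<lambda>j. n - j * c) {0..x div 2}"
      unfolding inj_on_def
    proof (intro ballI impI)
      fix a b assume ab: "a \<in> {0..x div 2}" "b \<in> {0..x div 2}" "n - a * c = n - b * c"
      have "a * c = b * c" using ab \<open>\<And>j. j \<le> x div 2 \<Longrightarrow> j * c \<le> n\<close>
        by (metis atLeastAtMost_iff diff_diff_cancel)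
      then show "a = b" using assms by simp
    qed
    show "(\<Sum>j\<in>{0..x div 2}. ((\<lambda>i. w $ i * geo c $ (n - i)) \<circ> (\<lambda>j. n - j * c)) j)
        = (\<Sum>j\<in>{0..x div 2}. w $ (n - j * c))"
      using \<open>\<And>j. j \<le> x div 2 \<Longrightarrow> j * c \<le> n\<close> by (intro sum.cong refl) (auto simp: geo_nth)
  qed
  have s4: "(\<Sum>j\<in>{0..x div 2}. w $ (n - j * c)) \<ge> (\<Sum>j\<in>{0..x div 2}. of_nat ((x div 2 ^ Suc T) ^ T))"
  proof (rule sum_mono)
    fix j assume j: "j \<in> {0..x div 2}"
    have jc: "j * c \<le> n"
    proof -
      have "j * c \<le> x * c" using j by (intro mult_right_mono) auto
      also have "x * c \<le> n" by (simp add: x_def)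
      finally show ?thesis .
    qed
    have "(n - j * c + j * c) div c = j + (n - j * c) div c"
      using assms by (intro div_mult_self1) auto
    then have "(n - j * c) div c = x - j" unfolding x_def using jc by simp
    then have "x div 2 ^ Suc T \<le> (n - j * c) div c div 2 ^ T"
      using j by (auto intro!: div_le_mono simp: div_mult2_eq)
    then have "of_nat ((x div 2 ^ Suc T) ^ T) \<le> (of_nat (((n - j * c) div c div 2 ^ T) ^ T) :: rat)"
      by (intro of_nat_mono power_mono) auto
    also have "\<dots> \<le> w $ (n - j * c)" unfolding w_def by (rule Suc.IH)
    finally show "of_nat ((x div 2 ^ Suc T) ^ T) \<le> w $ (n - j * c)" .
  qed
  have s5: "(\<Sum>j\<in>{0..x div 2}. of_nat ((x div 2 ^ Suc T) ^ T)) = of_nat (Suc (x div 2)) * (of_nat ((x div 2 ^ Suc T) ^ T) :: rat)"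
    by simp
  have s6: "of_nat (Suc (x div 2)) * (of_nat ((x div 2 ^ Suc T) ^ T) :: rat) \<ge> of_nat ((x div 2 ^ Suc T) ^ Suc T)"
  proof -
    have "x div 2 ^ Suc T \<le> Suc (x div 2)"
      by (metis div_le_dividend div_mult2_eq le_SucI power_Suc)
    then have "(x div 2 ^ Suc T) * (x div 2 ^ Suc T) ^ T \<le> Suc (x div 2) * (x div 2 ^ Suc T) ^ T"
      by (rule mult_right_mono) simp
    then have "(x div 2 ^ Suc T) ^ Suc T \<le> Suc (x div 2) * (x div 2 ^ Suc T) ^ T"
      by (simp only: power_Suc)
    then show ?thesis by (metis of_nat_le_iff of_nat_mult)
  qed
  show ?case unfolding x_def[symmetric] using s1 s2 s3 s4 s5 s6 by linarith
qed


lemma G_lower: assumes "\<And>m. 1 \<le> m \<Longrightarrow> e m \<ge> 1" "Suc T \<le> N"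
  shows "of_nat ((n div (fact (Suc T) * 2 ^ T)) ^ T) \<le> G e N $ n"
proof -
  have c: "fact (Suc T) \<ge> (1::nat)" by (simp add: Suc_leI)
  have "of_nat ((n div (fact (Suc T) * 2 ^ T)) ^ T) \<le> (geo 1 * geo (fact (Suc T)) ^ T) $ n"
    using w_lower[OF c, of n T] by (simp add: div_mult2_eq)
  also have "\<dots> \<le> (\<Prod>m\<in>{1..Suc T}. geo m) $ n" using prod_geo_ge[of "fact (Suc T)" T] by (simp add: fle_def)
  also have "\<dots> \<le> G e N $ n" using G_ge_prod[OF assms] by (simp add: fle_def)
  finally show ?thesis .
qed

lemma poly_vs: assumes "B \<ge> 1" "(\<delta>::rat) > 0"
  shows "\<exists>n0. \<forall>n\<ge>n0. (of_nat n + 1) ^ D \<le> \<delta> * of_nat ((n div B) ^ Suc D)"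
proof -
  obtain K :: nat where K: "(2 * of_nat B) ^ D / \<delta> < of_nat K" using reals_Archimedean2 by blast
  show ?thesis
  proof (intro exI allI impI)
    fix n assume n: "n \<ge> B * (K + 1)"
    define y where "y = n div B"
    have y: "y \<ge> K + 1"
    proof -
      have "B * (K + 1) div B \<le> n div B" by (rule div_le_mono[OF n])
      then show ?thesis using assms(1) by (simp add: y_def)
    qed
    have "n < B * (y + 1)" unfolding y_def using assms(1)
      by (metis add.commute dividend_less_times_div less_le_trans mult_Suc_right le_refl
          Suc_eq_plus1 less_one not_le zero_less_iff_neq_zero)
    moreover have "B \<le> B * y" using y by simp
    moreover have "B * (y + 1) = B + B * y" by simp
    ultimately have "n + 1 \<le> 2 * (B * y)" by linarith
    then have "(of_nat (n + 1) :: rat) \<le> of_nat (2 * (B * y))" by (simp only: of_nat_le_iff)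
    then have ny: "(of_nat n + 1 :: rat) \<le> 2 * of_nat B * of_nat y" by (simp add: mult.assoc)
    have "(of_nat n + 1 :: rat) ^ D \<le> (2 * of_nat B * of_nat y) ^ D"
      by (rule power_mono[OF ny]) simp
    also have "\<dots> = (2 * of_nat B) ^ D * of_nat y ^ D" by (simp add: power_mult_distrib)
    also have "\<dots> \<le> (\<delta> * of_nat y) * of_nat y ^ D"
    proof (rule mult_right_mono)
      have "(2 * of_nat B) ^ D < \<delta> * of_nat K" using K assms(2) by (simp add: divide_less_eq mult.commute)
      also have "\<dots> \<le> \<delta> * of_nat y" using y assms(2) by (intro mult_left_mono) auto
      finally show "(2 * of_nat B) ^ D \<le> \<delta> * of_nat y" by simp
    qed simp
    also have "\<dots> = \<delta> * of_nat (y ^ Suc D)" by simp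
    finally show "(of_nat n + 1) ^ D \<le> \<delta> * of_nat ((n div B) ^ Suc D)" unfolding y_def .
  qed
qed

lemma harm_pow2: "(of_nat k / 2 :: rat) \<le> (\<Sum>L\<in>{1..2^k}. 1 / of_nat L)"
proof (induction k)
  case 0 then show ?case by simp
next
  case (Suc k)
  have disj: "{1..2 ^ Suc k} = {1..2^k} \<union> {2^k<..(2::nat)^Suc k}"
    using one_le_power[of "2::nat" k] by auto
  have "(1/2 :: rat) \<le> (\<Sum>L\<in>{2^k<..2^Suc k}. 1 / of_nat L)"
  proof -
    have "of_nat (card {2^k<..(2::nat)^Suc k}) * (1 / of_nat (2 ^ Suc k)) \<le> (\<Sum>L\<in>{2^k<..2^Suc k}. 1 / (of_nat L :: rat))"
    proof (rule sum_bounded_below)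
      fix i assume i: "i \<in> {2^k<..(2::nat)^Suc k}"
      then have "(of_nat i :: rat) \<le> of_nat (2^Suc k)" by (simp only: of_nat_le_iff) auto
      moreover have "(0::rat) < of_nat i" using i by auto
      ultimately show "1 / of_nat (2 ^ Suc k) \<le> 1 / (of_nat i :: rat)"
        by (intro divide_left_mono) auto
    qed
    moreover have "card {2^k<..(2::nat)^Suc k} = 2 ^ k" by simp
    ultimately show ?thesis by simp
  qed
  then have "(\<Sum>L\<in>{1..2 ^ Suc k}. 1 / of_nat L) \<ge> (of_nat k / 2 + 1 / 2 :: rat)"
    using Suc unfolding disj by (subst sum.union_disjoint) auto
  then show ?case by (simp add: field_simps)
qed

lemma harm_big: "\<exists>J\<ge>1. B \<le> (\<Sum>L\<in>{1..J}. 1 / of_nat (3 * (1 + 3 * L)) :: rat)"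
proof -
  obtain k :: nat where k: "24 * B < of_nat k" using reals_Archimedean2 by blast
  have "B \<le> (of_nat k / 2) / 12" using k by simp
  also have "\<dots> \<le> (\<Sum>L\<in>{1..2^k}. 1 / of_nat L) / 12" by (intro divide_right_mono harm_pow2) simp
  also have "\<dots> = (\<Sum>L\<in>{1..2^k}. 1 / of_nat (12 * L))" by (simp add: sum_divide_distrib mult.commute)
  also have "\<dots> \<le> (\<Sum>L\<in>{1..2^k}. 1 / of_nat (3 * (1 + 3 * L)))"
    by (intro sum_mono) (auto intro!: divide_left_mono)
  finally show ?thesis by (intro exI[of _ "2^k"]) auto
qed


context mult13 begin

lemma cum_small: assumes eps: "\<epsilon> > 0"
  shows "\<exists>n0. \<forall>n\<ge>n0. G e n $ n \<le> \<epsilon> * (\<Sum>i=0..n. G e i $ i)"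
proof -
  obtain J where J: "J \<ge> 1" "2 / \<epsilon> \<le> (\<Sum>L\<in>{1..J}. 1 / of_nat (3 * (1 + 3 * L)) :: rat)"
    using harm_big by blast
  define D where "D = 3 * J"
  define T where "T = Suc D"
  define B :: nat where "B = fact (Suc T) * 2 ^ T"
  have B1: "B \<ge> 1" unfolding B_def by (simp add: Suc_leI)
  obtain n1 where n1: "\<And>n. n \<ge> n1 \<Longrightarrow> (of_nat n + 1) ^ D \<le> (1/2::rat) * of_nat ((n div B) ^ Suc D)"
    using poly_vs[OF B1, of "1/2" D] by auto
  show ?thesis
  proof (intro exI allI impI)
    fix n assume n: "n \<ge> max n1 (max J (Suc T))"
    define W where "W i = G e i $ i" for i
    define P where "P = (of_nat n + 1 :: rat) ^ D"
    have Wnn: "0 \<le> W i" for i using nn_G unfolding W_def nn_def by blast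
    have "of_nat ((n div B) ^ T) \<le> W n"
      unfolding W_def B_def by (rule G_lower) (use e13 n in auto)
    then have PW: "P \<le> W n / 2" using n1[of n] n unfolding P_def T_def by auto
    have each: "W n / 2 * (1 / of_nat (3 * (1 + 3 * L))) \<le> W (n - L)" if L: "L \<in> {1..J}" for L
    proof -
      have Ln: "1 \<le> L" "L \<le> n" using L n by auto
      have lp: "W n \<le> G e (L - 1) $ n + of_nat (3 * (1 + 3 * L)) * W (n - L)"
        unfolding W_def by (rule largest_part[OF Ln])
      have "(\<Sum>m\<in>{1..L-1}. e m) \<le> of_nat (card {1..L-1}) * 3"
        by (rule sum_bounded_above) (use e13 in auto)
      also have "\<dots> \<le> D" using L by (auto simp: D_def)
      finally have "G e (L - 1) $ n \<le> P" unfolding P_def by (rule G_poly_upper)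
      then have "W n / 2 \<le> of_nat (3 * (1 + 3 * L)) * W (n - L)" using lp PW by linarith
      moreover have "(0::rat) < of_nat (3 * (1 + 3 * L))" by simp
      ultimately show ?thesis by (simp add: field_simps)
    qed
    have "W n / 2 * (2 / \<epsilon>) \<le> W n / 2 * (\<Sum>L\<in>{1..J}. 1 / of_nat (3 * (1 + 3 * L)))"
      by (rule mult_left_mono[OF J(2)]) (use Wnn in auto)
    also have "\<dots> = (\<Sum>L\<in>{1..J}. W n / 2 * (1 / of_nat (3 * (1 + 3 * L))))"
      by (simp add: sum_distrib_left)
    also have "\<dots> \<le> (\<Sum>L\<in>{1..J}. W (n - L))" by (rule sum_mono[OF each])
    also have "(\<Sum>L\<in>{1..J}. W (n - L)) = (\<Sum>i\<in>(\<lambda>L. n - L) ` {1..J}. W i)"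
      using n by (subst sum.reindex) (auto simp: inj_on_def)
    also have "\<dots> \<le> (\<Sum>i=0..n. W i)" by (rule sum_mono2) (use Wnn in auto)
    finally have "W n / \<epsilon> \<le> (\<Sum>i=0..n. W i)" using eps by simp
    then show "G e n $ n \<le> \<epsilon> * (\<Sum>i=0..n. G e i $ i)"
      using eps unfolding W_def by (simp add: field_simps)
  qed
qed

end


abbreviation px :: "rat poly" where "px \<equiv> [:0, 1:]"

definition qq :: "nat \<Rightarrow> rat poly" where "qq b = (\<Sum>i<b. px ^ i)"

lemma qq_mult: "(1 - px) * qq b = 1 - px ^ b"
  unfolding qq_def by (rule one_diff_power_eq[symmetric])

lemma qq_add: "qq (a + b) = qq a + px ^ a * qq b"
proof -
  have "(\<Sum>i<a + b. px ^ i) = (\<Sum>i\<in>{0..<a}. px ^ i) + (\<Sum>i\<in>{a..<a+b}. px ^ i)"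
    by (simp add: lessThan_atLeast0 sum.atLeastLessThan_concat)
  also have "(\<Sum>i\<in>{a..<a+b}. px ^ i) = (\<Sum>i\<in>{0..<b}. px ^ (i + a))"
    using sum.shift_bounds_nat_ivl[of "\<lambda>i. px ^ i" 0 a b] by (simp add: add.commute)
  also have "\<dots> = px ^ a * (\<Sum>i<b. px ^ i)"
    by (simp add: sum_distrib_left power_add lessThan_atLeast0 mult.commute)
  finally show ?thesis unfolding qq_def by (simp add: lessThan_atLeast0)
qed

lemma coprime_add_multI: fixes x y z :: "rat poly" assumes "coprime x y" shows "coprime x (y + z * x)"
proof (rule coprimeI)
  fix d assume d: "d dvd x" "d dvd y + z * x"
  then have "d dvd y" by (metis dvd_add_left_iff dvd_mult)
  then show "is_unit d" using d assms coprime_common_divisor by blast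
qed

lemma coprime_qq: "coprime a b \<Longrightarrow> coprime (qq a) (qq b)"
proof (induction "a + b" arbitrary: a b rule: less_induct)
  case less
  show ?case
  proof (cases "a = 0 \<or> b = 0")
    case True
    then have "(a = 0 \<and> b = 1) \<or> (b = 0 \<and> a = 1)" using less.prems by auto
    then show ?thesis by (auto simp: qq_def)
  next
    case False
    show ?thesis
    proof (cases "a \<le> b")
      case True
      define c where "c = b - a"
      have b: "b = c + a" using True by (simp add: c_def)
      have cop: "coprime a c" using less.prems gcd_add2[of a c] unfolding b coprime_iff_gcd_eq_1 by (simp only: add.commute)
      have "coprime (qq a) (qq c)" using less.hyps[of a c] False cop b by auto
      then have "coprime (qq a) (qq c + px ^ c * qq a)" by (rule coprime_add_multI)
      then show ?thesis by (simp add: b qq_add)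
    next
      case nle: False
      define c where "c = a - b"
      have a: "a = c + b" using nle by (simp add: c_def)
      have cop: "coprime b c" using less.prems gcd_add2[of b c] unfolding a coprime_iff_gcd_eq_1 by (simp only: add.commute gcd.commute)
      have "coprime (qq b) (qq c)" using less.hyps[of b c] False cop a by auto
      then have "coprime (qq b) (qq c + px ^ c * qq b)" by (rule coprime_add_multI)
      then show ?thesis by (simp add: a qq_add coprime_commute)
    qed
  qed
qed

lemma bezout_poly: "coprime p q \<Longrightarrow> \<exists>u v. u * p + v * q = (1 :: rat poly)"
  using bezout_coefficients_fst_snd[of p q] by (metis coprime_imp_gcd_eq_1)

lemma poly_qq_1: "poly (qq a) 1 = of_nat a"
  by (simp add: qq_def poly_sum)


declare prod.cl_ivl_Suc[simp del] sum.cl_ivl_Suc[simp del]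

lemma prod_one_minus: "(\<Prod>a\<in>A. 1 - px ^ a) = (1 - px) ^ card A * (\<Prod>a\<in>A. qq a)"
  by (simp add: qq_mult[symmetric] prod.distrib)

lemma fact_prod_2: "(\<Prod>a\<in>{2..Suc r}. (of_nat a :: rat)) = fact (Suc r)"
proof -
  have h: "{1..Suc r} = insert 1 {2..Suc r}" by auto
  have "(\<Prod>a\<in>{1..Suc r}. (of_nat a :: rat)) = (\<Prod>a\<in>{2..Suc r}. of_nat a)"
    unfolding h by (subst prod.insert) auto
  then show ?thesis by (simp only: fact_prod of_nat_prod)
qed

definition U1 :: "nat \<Rightarrow> nat set" where "U1 r = (\<lambda>i. 2 ^ i) ` {1..Suc r}"
definition U2 :: "nat \<Rightarrow> nat set" where "U2 r = (\<lambda>i. 2 * i + 1) ` {1..Suc r}"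

lemma card_U1: "card (U1 r) = Suc r"
  unfolding U1_def by (subst card_image) (auto simp: inj_on_def)
lemma card_U2: "card (U2 r) = Suc r"
  unfolding U2_def by (subst card_image) (auto simp: inj_on_def)

lemma coprime_U: "coprime (\<Prod>b\<in>U1 r. qq b) (\<Prod>c\<in>U2 r. qq c)"
proof (intro prod_coprime_left prod_coprime_right coprime_qq)
  fix b c assume "b \<in> U1 r" "c \<in> U2 r"
  then obtain i j where "b = 2 ^ i" "c = 2 * j + 1" "i \<ge> 1" by (auto simp: U1_def U2_def)
  then show "coprime b c" by simp
qed

lemma main_poly:
  "\<exists>R1 R2. (1 - px) ^ r = smult (1 / fact (Suc r)) (\<Prod>a\<in>{2..Suc r}. 1 - px ^ a)
     + R1 * (\<Prod>b\<in>U1 r. 1 - px ^ b) + R2 * (\<Prod>b\<in>U2 r. 1 - px ^ b)"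
proof -
  define c :: rat where "c = 1 / fact (Suc r)"
  define P where "P = (\<Prod>a\<in>{2..Suc r}. qq a)"
  have "poly P 1 = fact (Suc r)" unfolding P_def by (simp only: poly_prod poly_qq_1 fact_prod_2)
  then have "poly (1 - smult c P) 1 = 0" by (simp add: c_def)
  then obtain Q1 where Q1: "1 - smult c P = [:-1, 1:] * Q1" using poly_eq_0_iff_dvd by (metis dvdE)
  obtain u v where uv: "u * (\<Prod>b\<in>U1 r. qq b) + v * (\<Prod>c\<in>U2 r. qq c) = 1"
    using bezout_poly[OF coprime_U] by blast
  have m1: "[:-1, 1:] = - (1 - px)" by (simp add: one_pCons)
  have "(1 - px) ^ r = smult c ((1 - px) ^ r * P) + (1 - px) ^ r * (1 - smult c P)"
    by (simp add: algebra_simps)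
  also have "(1 - px) ^ r * P = (\<Prod>a\<in>{2..Suc r}. 1 - px ^ a)"
    unfolding P_def prod_one_minus by simp
  also have "(1 - px) ^ r * (1 - smult c P) = (1 - px) ^ Suc r * (- Q1)"
    unfolding Q1 m1 by (simp add: algebra_simps)
  also have "(1 - px) ^ Suc r = (1 - px) ^ Suc r * (u * (\<Prod>b\<in>U1 r. qq b) + v * (\<Prod>c\<in>U2 r. qq c))"
    unfolding uv by simp
  also have "\<dots> = u * (\<Prod>b\<in>U1 r. 1 - px ^ b) + v * (\<Prod>b\<in>U2 r. 1 - px ^ b)"
    unfolding prod_one_minus card_U1 card_U2 by (simp add: algebra_simps)
  finally have "(1 - px) ^ r = smult c (\<Prod>a\<in>{2..Suc r}. 1 - px ^ a)
      + (- Q1 * u) * (\<Prod>b\<in>U1 r. 1 - px ^ b) + (- Q1 * v) * (\<Prod>b\<in>U2 r. 1 - px ^ b)"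
    by (simp add: algebra_simps)
  then show ?thesis unfolding c_def by blast
qed

lemma fps_of_poly_one_minus: "fps_of_poly (1 - px ^ a) = 1 - fps_X ^ a"
  by (simp add: fps_of_poly_diff fps_of_poly_power)

lemma main_fps:
  "\<exists>R1 R2. (1 - fps_X :: rat fps) ^ r = fps_const (1 / fact (Suc r)) * (\<Prod>a\<in>{2..Suc r}. 1 - fps_X ^ a)
     + fps_of_poly R1 * (\<Prod>b\<in>U1 r. 1 - fps_X ^ b) + fps_of_poly R2 * (\<Prod>b\<in>U2 r. 1 - fps_X ^ b)"
proof -
  obtain R1 R2 where R: "(1 - px) ^ r = smult (1 / fact (Suc r)) (\<Prod>a\<in>{2..Suc r}. 1 - px ^ a)
     + R1 * (\<Prod>b\<in>U1 r. 1 - px ^ b) + R2 * (\<Prod>b\<in>U2 r. 1 - px ^ b)" using main_poly by blast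
  have 1: "fps_of_poly ((1 - px) ^ r) = (1 - fps_X) ^ r"
    by (simp only: fps_of_poly_diff fps_of_poly_power fps_of_poly_1 fps_of_poly_fps_X)
  have 2: "fps_of_poly (\<Prod>a\<in>A. 1 - px ^ a) = (\<Prod>a\<in>A. 1 - fps_X ^ a)" for A
    by (simp only: fps_of_poly_prod fps_of_poly_diff fps_of_poly_power fps_of_poly_1 fps_of_poly_fps_X)
  have "fps_of_poly ((1 - px) ^ r) = fps_const (1 / fact (Suc r)) * fps_of_poly (\<Prod>a\<in>{2..Suc r}. 1 - px ^ a)
     + fps_of_poly R1 * fps_of_poly (\<Prod>b\<in>U1 r. 1 - px ^ b) + fps_of_poly R2 * fps_of_poly (\<Prod>b\<in>U2 r. 1 - px ^ b)"
    unfolding R by (simp only: fps_of_poly_add fps_of_poly_mult fps_of_poly_smult)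
  then have "(1 - fps_X) ^ r = fps_const (1 / fact (Suc r)) * (\<Prod>a\<in>{2..Suc r}. 1 - fps_X ^ a)
     + fps_of_poly R1 * (\<Prod>b\<in>U1 r. 1 - fps_X ^ b) + fps_of_poly R2 * (\<Prod>b\<in>U2 r. 1 - fps_X ^ b)" unfolding 1 2 .
  then show ?thesis by (intro exI)
qed

definition cabs :: "rat poly \<Rightarrow> rat" where "cabs R = (\<Sum>i\<le>degree R. \<bar>coeff R i\<bar>)"

lemma remainder_bound: assumes "nn F" "incr F"
  shows "\<bar>(fps_of_poly R * F) $ n\<bar> \<le> cabs R * F $ n"
proof -
  have Fn: "0 \<le> F $ i" for i using assms(1) by (simp add: nn_def)
  have "\<bar>(fps_of_poly R * F) $ n\<bar> = \<bar>\<Sum>i=0..n. coeff R i * F $ (n - i)\<bar>"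
    by (simp add: fps_mult_nth)
  also have "\<dots> \<le> (\<Sum>i=0..n. \<bar>coeff R i\<bar> * F $ (n - i))"
    by (rule order_trans[OF sum_abs]) (simp add: abs_mult Fn)
  also have "\<dots> \<le> (\<Sum>i=0..n. \<bar>coeff R i\<bar> * F $ n)"
    by (intro sum_mono mult_left_mono incr_mono[OF assms(2)]) auto
  also have "\<dots> = (\<Sum>i=0..n. \<bar>coeff R i\<bar>) * F $ n" by (simp add: sum_distrib_right)
  also have "(\<Sum>i=0..n. \<bar>coeff R i\<bar>) \<le> cabs R"
  proof -
    have "(\<Sum>i=0..n. \<bar>coeff R i\<bar>) \<le> (\<Sum>i=0..max n (degree R). \<bar>coeff R i\<bar>)"
      by (rule sum_mono2) auto
    also have "\<dots> = cabs R" unfolding cabs_def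
      by (rule sum.mono_neutral_right) (auto simp: coeff_eq_0)
    finally show ?thesis .
  qed
  then have "(\<Sum>i=0..n. \<bar>coeff R i\<bar>) * F $ n \<le> cabs R * F $ n" by (rule mult_right_mono) (simp add: Fn)
  finally show ?thesis .
qed



definition ek :: "nat \<Rightarrow> nat \<Rightarrow> nat" where
  "ek k j = (if odd j \<and> \<not> (2 * k + 1) dvd j then 3 else 2)"

lemma inv_one_minus: "j \<ge> 1 \<Longrightarrow> inverse (1 - fps_X ^ j :: rat fps) = geo j"
  by (rule fps_inverse_unique) (rule geo_inv)

lemma Delta_factor_eq: assumes "m \<ge> 1"
  shows "Delta_factor k m = (1 - fps_X ^ (2 * m)) * (1 - fps_X ^ ((2 * k + 1) * m)) * geo m ^ 3 * geo ((4 * k + 2) * m)"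
proof -
  have m1: "(4 * k + 2) * m \<ge> 1" using assms by simp
  have "Delta_factor k m = ((1 - fps_X ^ (2 * m)) * (1 - fps_X ^ ((2 * k + 1) * m))) *
      inverse ((1 - fps_X ^ m) ^ 3 * (1 - fps_X ^ ((4 * k + 2) * m)))"
    unfolding Delta_factor_def using assms by (intro fps_divide_unit) simp
  also have "inverse ((1 - fps_X ^ m) ^ 3 * (1 - fps_X ^ ((4 * k + 2) * m)) :: rat fps) = geo m ^ 3 * geo ((4 * k + 2) * m)"
    using assms m1 by (simp add: fps_inverse_mult fps_inverse_power inv_one_minus)
  finally show ?thesis by (simp add: mult_ac)
qed

definition feq :: "nat \<Rightarrow> rat fps \<Rightarrow> rat fps \<Rightarrow> bool" where
  "feq n f g \<longleftrightarrow> (\<forall>i\<le>n. f $ i = g $ i)"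

lemma feq_refl: "feq n f f" by (simp add: feq_def)
lemma feq_sym: "feq n f g \<Longrightarrow> feq n g f" by (simp add: feq_def)
lemma feq_trans: "feq n f g \<Longrightarrow> feq n g h \<Longrightarrow> feq n f h" by (simp add: feq_def)

lemma feq_mult: assumes "feq n a b" "feq n c d" shows "feq n (a * c) (b * d)"
  unfolding feq_def
proof (intro allI impI)
  fix i assume "i \<le> n"
  then show "(a * c) $ i = (b * d) $ i"
    using assms unfolding feq_def fps_mult_nth by (intro sum.cong) auto
qed

lemma feq_prod: "(\<And>x. x \<in> A \<Longrightarrow> feq n (f x) (g x)) \<Longrightarrow> feq n (\<Prod>x\<in>A. f x) (\<Prod>x\<in>A. g x)"
  by (induction A rule: infinite_finite_induct) (auto intro: feq_mult feq_refl)

lemma feq_one_minus: "j > n \<Longrightarrow> feq n (1 - fps_X ^ j) 1"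
  by (auto simp: feq_def fps_X_power_nth)

lemma feq_geo_pow: "j > n \<Longrightarrow> feq n (geo j ^ p) 1"
  by (auto simp: feq_def geo_pow_low)

lemma prod_reindex_mult: assumes "c \<ge> 1" "\<And>j. j > n \<Longrightarrow> feq n (f j) 1"
  shows "feq n (\<Prod>m\<in>{1..n}. f (c * m)) (\<Prod>j\<in>{1..n}. if c dvd j then f j else 1)"
proof -
  have "feq n (\<Prod>m\<in>{1..n}. f (c * m)) (\<Prod>m\<in>{1..n}. if c * m \<le> n then f (c * m) else 1)"
    by (rule feq_prod) (auto intro: feq_refl assms(2))
  also have "(\<Prod>m\<in>{1..n}. if c * m \<le> n then f (c * m) else 1) = (\<Prod>m\<in>{m\<in>{1..n}. c * m \<le> n}. f (c * m))"
    by (rule prod.inter_filter[symmetric]) simp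
  also have "\<dots> = (\<Prod>j\<in>(\<lambda>m. c * m) ` {m\<in>{1..n}. c * m \<le> n}. f j)"
    using assms(1) by (subst prod.reindex) (auto simp: inj_on_def)
  also have "(\<lambda>m. c * m) ` {m\<in>{1..n}. c * m \<le> n} = {j\<in>{1..n}. c dvd j}"
  proof (rule set_eqI, rule iffI)
    fix j assume "j \<in> (\<lambda>m. c * m) ` {m\<in>{1..n}. c * m \<le> n}"
    then show "j \<in> {j\<in>{1..n}. c dvd j}" using assms(1) by auto
  next
    fix j assume j: "j \<in> {j\<in>{1..n}. c dvd j}"
    then obtain m where m: "j = c * m" by auto
    have "m \<le> c * m" using assms(1) by simp
    have cm: "c * m \<le> n" using j m by auto
    have m1: "m \<ge> 1" using j m by (auto intro: Suc_leI)
    have "m \<le> n" using cm \<open>m \<le> c * m\<close> by linarith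
    note m1 this
    then show "j \<in> (\<lambda>m. c * m) ` {m\<in>{1..n}. c * m \<le> n}" using m j by auto
  qed
  also have "(\<Prod>j\<in>{j\<in>{1..n}. c dvd j}. f j) = (\<Prod>j\<in>{1..n}. if c dvd j then f j else 1)"
    by (rule prod.inter_filter) simp
  finally show ?thesis by (simp add: feq_refl)
qed


lemma dvd_4k2: "((4 * k + 2) dvd (j::nat)) \<longleftrightarrow> (2 dvd j \<and> (2 * k + 1) dvd j)"
proof
  assume "(4 * k + 2) dvd j"
  moreover have "4 * k + 2 = 2 * (2 * k + 1)" by simp
  ultimately show "2 dvd j \<and> (2 * k + 1) dvd j" by (metis dvd_mult_left dvd_mult_right)
next
  assume h: "2 dvd j \<and> (2 * k + 1) dvd j"
  have cop: "coprime (2::nat) (2 * k + 1)" by simp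
  have "2 * (2 * k + 1) dvd j" using h cop by (intro divides_mult) auto
  moreover have "4 * k + 2 = 2 * (2 * k + 1)" by simp
  ultimately show "(4 * k + 2) dvd j" by (simp only:)
qed

lemma factor_eq: assumes "j \<ge> 1"
  shows "(if 2 dvd j then 1 - fps_X ^ j else 1) * (if (2 * k + 1) dvd j then 1 - fps_X ^ j else 1)
     * geo j ^ 3 * (if (4 * k + 2) dvd j then geo j else 1) = geo j ^ ek k j"
proof -
  define u :: "rat fps" where "u = 1 - fps_X ^ j"
  define y where "y = geo j"
  have uy: "u * y = 1" unfolding u_def y_def by (rule geo_inv[OF assms])
  have c3: "y ^ 3 = y * y * y" by (simp add: power3_eq_cube)
  show ?thesis unfolding u_def[symmetric] y_def[symmetric] dvd_4k2 ek_def
  proof (cases "2 dvd j"; cases "(2 * k + 1) dvd j")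
    assume "2 dvd j" "(2 * k + 1) dvd j"
    then show "(if 2 dvd j then u else 1) * (if (2 * k + 1) dvd j then u else 1) * y ^ 3 *
      (if 2 dvd j \<and> (2 * k + 1) dvd j then y else 1) = y ^ (if odd j \<and> \<not> (2 * k + 1) dvd j then 3 else 2)"
    proof -
      have "u * u * (y * y * y) * y = (u * y) * (u * y) * (y * y)" by (simp only: mult_ac)
      then show ?thesis using \<open>2 dvd j\<close> \<open>(2 * k + 1) dvd j\<close> uy c3 by (simp add: power2_eq_square)
    qed
  next
    assume "2 dvd j" "\<not> (2 * k + 1) dvd j"
    then show "(if 2 dvd j then u else 1) * (if (2 * k + 1) dvd j then u else 1) * y ^ 3 *
      (if 2 dvd j \<and> (2 * k + 1) dvd j then y else 1) = y ^ (if odd j \<and> \<not> (2 * k + 1) dvd j then 3 else 2)"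
    proof -
      have "u * (y * y * y) = (u * y) * (y * y)" by (simp only: mult_ac)
      then show ?thesis using \<open>2 dvd j\<close> \<open>\<not> (2 * k + 1) dvd j\<close> uy c3 by (simp add: power2_eq_square)
    qed
  next
    assume "\<not> 2 dvd j" "(2 * k + 1) dvd j"
    then show "(if 2 dvd j then u else 1) * (if (2 * k + 1) dvd j then u else 1) * y ^ 3 *
      (if 2 dvd j \<and> (2 * k + 1) dvd j then y else 1) = y ^ (if odd j \<and> \<not> (2 * k + 1) dvd j then 3 else 2)"
    proof -
      have "u * (y * y * y) = (u * y) * (y * y)" by (simp only: mult_ac)
      then show ?thesis using \<open>\<not> 2 dvd j\<close> \<open>(2 * k + 1) dvd j\<close> uy c3 by (simp add: power2_eq_square)
    qed
  next
    assume "\<not> 2 dvd j" "\<not> (2 * k + 1) dvd j"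
    then show "(if 2 dvd j then u else 1) * (if (2 * k + 1) dvd j then u else 1) * y ^ 3 *
      (if 2 dvd j \<and> (2 * k + 1) dvd j then y else 1) = y ^ (if odd j \<and> \<not> (2 * k + 1) dvd j then 3 else 2)"
      by (simp add: c3)
  qed
qed

lemma Delta_G: "Delta k n = G (ek k) n $ n"
proof -
  define A where "A = (\<Prod>j\<in>{1..n}. if 2 dvd j then 1 - fps_X ^ j else (1::rat fps))"
  define B where "B = (\<Prod>j\<in>{1..n}. if (2 * k + 1) dvd j then 1 - fps_X ^ j else (1::rat fps))"
  define C where "C = (\<Prod>j\<in>{1..n}. geo j ^ 3)"
  define D where "D = (\<Prod>j\<in>{1..n}. if (4 * k + 2) dvd j then geo j else 1)"
  have "(\<Prod>m\<in>{1..n}. Delta_factor k m) = (\<Prod>m\<in>{1..n}. (1 - fps_X ^ (2 * m)) * (1 - fps_X ^ ((2 * k + 1) * m)) * geo m ^ 3 * geo ((4 * k + 2) * m))"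
    by (rule prod.cong) (auto simp: Delta_factor_eq)
  also have "\<dots> = (\<Prod>m\<in>{1..n}. 1 - fps_X ^ (2 * m)) * (\<Prod>m\<in>{1..n}. 1 - fps_X ^ ((2 * k + 1) * m))
      * C * (\<Prod>m\<in>{1..n}. geo ((4 * k + 2) * m))"
    by (simp add: prod.distrib C_def)
  finally have P: "(\<Prod>m\<in>{1..n}. Delta_factor k m) = (\<Prod>m\<in>{1..n}. 1 - fps_X ^ (2 * m)) * (\<Prod>m\<in>{1..n}. 1 - fps_X ^ ((2 * k + 1) * m))
      * C * (\<Prod>m\<in>{1..n}. geo ((4 * k + 2) * m))" .
  have fa: "feq n (\<Prod>m\<in>{1..n}. 1 - fps_X ^ (2 * m)) A"
    unfolding A_def by (rule prod_reindex_mult[where f = "\<lambda>j. 1 - fps_X ^ j"]) (auto intro: feq_one_minus)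
  have fb: "feq n (\<Prod>m\<in>{1..n}. 1 - fps_X ^ ((2 * k + 1) * m)) B"
    unfolding B_def by (rule prod_reindex_mult[where f = "\<lambda>j. 1 - fps_X ^ j"]) (auto intro: feq_one_minus)
  have fd: "feq n (\<Prod>m\<in>{1..n}. geo ((4 * k + 2) * m)) D"
    unfolding D_def using feq_geo_pow[where p = 1]
    by (intro prod_reindex_mult[where f = geo]) auto
  have "feq n (\<Prod>m\<in>{1..n}. Delta_factor k m) (A * B * C * D)"
    unfolding P by (intro feq_mult fa fb fd feq_refl)
  also have "A * B * C * D = G (ek k) n"
    unfolding A_def B_def C_def D_def G_def prod.distrib[symmetric]
    by (rule prod.cong[OF refl], rule factor_eq) auto
  finally show ?thesis unfolding Delta_def feq_def by simp
qed


lemma binom_expand: "(1 - fps_X :: rat fps) ^ r = (\<Sum>i\<le>r. of_nat (r choose i) * ((-1) ^ (r - i) * fps_X ^ (r - i)))"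
proof -
  have "(1 - fps_X :: rat fps) ^ r = (1 + (- fps_X)) ^ r" by (simp only: diff_conv_add_uminus)
  also have "\<dots> = (\<Sum>i\<le>r. of_nat (r choose i) * 1 ^ i * (- fps_X) ^ (r - i))"
    by (rule binomial_ring)
  also have "\<dots> = (\<Sum>i\<le>r. of_nat (r choose i) * ((-1) ^ (r - i) * fps_X ^ (r - i)))"
    by (simp only: power_one mult_1_right power_minus[of "fps_X :: rat fps"])
  finally show ?thesis .
qed

lemma neg1_pow_nth: "((-1::rat fps) ^ j * H) $ m = (-1) ^ j * H $ m"
  by (cases "even j") simp_all

lemma binom_coeff: "((1 - fps_X) ^ r * (F :: rat fps)) $ (n + r) = (\<Sum>i=0..r. of_nat (r choose i) * (-1) ^ (r + i) * F $ (n + i))"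
proof -
  have "((1 - fps_X) ^ r * F) $ (n + r) = (\<Sum>i\<le>r. (of_nat (r choose i) * ((-1) ^ (r - i) * (fps_X ^ (r - i) * F))) $ (n + r))"
    unfolding binom_expand by (simp only: sum_distrib_right fps_sum_nth mult.assoc)
  also have "\<dots> = (\<Sum>i=0..r. of_nat (r choose i) * (-1) ^ (r + i) * F $ (n + i))"
  proof (unfold atMost_atLeast0, rule sum.cong[OF refl])
    fix i assume i: "i \<in> {0..r}"
    have ri: "r + i = (r - i) + 2 * i" using i by simp
    have "(-1::rat) ^ (r + i) = (-1) ^ (r - i) * (-1) ^ (2 * i)"
      unfolding ri by (rule power_add)
    also have "(-1::rat) ^ (2 * i) = 1" by (simp add: power_mult)
    finally have "(-1::rat) ^ (r + i) = (-1) ^ (r - i)" by simp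
    moreover have "(fps_X ^ (r - i) * F) $ (n + r) = F $ (n + i)"
    proof -
      have "\<not> (n + r < r - i)" by simp
      then show ?thesis using i by (simp add: fps_X_power_mult_nth)
    qed
    ultimately show "(of_nat (r choose i) * ((-1) ^ (r - i) * (fps_X ^ (r - i) * F))) $ (n + r)
        = of_nat (r choose i) * (-1) ^ (r + i) * F $ (n + i)"
      by (simp only: of_nat_fps_mult_nth neg1_pow_nth mult.assoc)
  qed
  finally show ?thesis .
qed


lemma ek_ge2: "ek k j \<ge> 2" by (simp add: ek_def)
lemma ek_le3: "ek k j \<le> 3" by (simp add: ek_def)
lemma ek_1: "k \<ge> 1 \<Longrightarrow> ek k 1 = 3"
  by (auto simp: ek_def dest: dvd_imp_le)

lemma count_mset_set_le1: "count (mset_set A) x \<le> 1"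
  by (simp add: count_mset_set')

lemma U1_bounds: "b \<in> U1 r \<Longrightarrow> 2 \<le> b \<and> b \<le> 2 ^ Suc r"
proof -
  assume "b \<in> U1 r"
  then obtain i where i: "b = 2 ^ i" "1 \<le> i" "i \<le> Suc r" by (auto simp: U1_def)
  have "(2::nat) ^ 1 \<le> 2 ^ i" using i by (intro power_increasing) auto
  moreover have "(2::nat) ^ i \<le> 2 ^ Suc r" using i by (intro power_increasing) auto
  ultimately show ?thesis using i by simp
qed

lemma U2_bounds: "b \<in> U2 r \<Longrightarrow> 2 \<le> b \<and> b \<le> 2 * r + 3"
  by (auto simp: U2_def)

lemma cum_eq:
  assumes "e 1 \<ge> 1" "1 \<le> N" "m \<le> N"
  shows "G e N $ m = (\<Sum>i=0..m. G (e(1 := e 1 - 1)) i $ i)"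
proof -
  define F where "F = G (e(1 := e 1 - 1)) N"
  have h0: "(1 - fps_X) * G e N = F" unfolding F_def using G_remove[of 1 N e] assms by simp
  have inv: "geo 1 * (1 - fps_X) = 1" using geo_inv[of 1] by (simp add: mult.commute)
  have "G e N = (geo 1 * (1 - fps_X)) * G e N" by (simp only: inv mult_1_left)
  also have "\<dots> = geo 1 * ((1 - fps_X) * G e N)" by (simp only: mult.assoc)
  finally have GF: "G e N = geo 1 * F" by (simp only: h0)
  have "G e N $ m = (\<Sum>i=0..m. F $ (m - i))" unfolding GF fps_mult_nth by (simp add: geo_nth)
  also have "\<dots> = (\<Sum>i=0..m. F $ i)"
    by (subst sum.atLeastAtMost_rev) (intro sum.cong refl, auto)
  also have "\<dots> = (\<Sum>i=0..m. G (e(1 := e 1 - 1)) i $ i)"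
    unfolding F_def using assms by (intro sum.cong refl G_stable) auto
  finally show ?thesis .
qed


lemma G_remove_set: assumes "finite A" "\<And>b. b \<in> A \<Longrightarrow> 1 \<le> b \<and> b \<le> N" "\<And>m. 1 \<le> e m"
  shows "(\<Prod>a\<in>A. 1 - fps_X ^ a) * G e N = G (sub e (mset_set A)) N"
proof -
  have "(\<Prod>a\<in>A. 1 - fps_X ^ a :: rat fps) = (\<Prod>b\<in>#mset_set A. 1 - fps_X ^ b)"
    by (rule prod_unfold_prod_mset)
  moreover have "(\<Prod>b\<in>#mset_set A. (1 - fps_X ^ b)) * G e N = G (sub e (mset_set A)) N"
  proof (rule G_remove_mset)
    show "count (mset_set A) m \<le> e m" for m using count_mset_set_le1[of A m] assms(3)[of m] by linarith
    show "1 \<le> b \<and> b \<le> N" if "b \<in># mset_set A" for b using that assms by auto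
  qed
  ultimately show ?thesis by (simp only:)
qed

lemma cabs_nonneg: "cabs R \<ge> 0" unfolding cabs_def by (intro sum_nonneg) auto

theorem theorem1p4:
  fixes k r :: nat
  assumes "k \<ge> 1" and "r \<ge> 1"
  shows "\<forall>\<^sub>F n in sequentially.
           (\<Sum>i = 0..r. of_nat (r choose i) * (-1) ^ (r + i) * Delta k (n + i)) > (0::rat)"
proof -
  define e where "e = ek k"
  define S where "S = {2..Suc r}"
  define TS where "TS = mset_set S"
  define T' where "T' = mset_set (insert 1 S)"
  define V1 where "V1 = mset_set (U1 r)"
  define V2 where "V2 = mset_set (U2 r)"
  define e' where "e' = sub e T'"
  define M0 where "M0 = 2 ^ Suc r + 2 * r + 3"
  define c :: rat where "c = 1 / fact (Suc r)"
  obtain R1 R2 where R: "(1 - fps_X :: rat fps) ^ r = fps_const c * (\<Prod>a\<in>S. 1 - fps_X ^ a)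
     + fps_of_poly R1 * (\<Prod>b\<in>U1 r. 1 - fps_X ^ b) + fps_of_poly R2 * (\<Prod>b\<in>U2 r. 1 - fps_X ^ b)"
    using main_fps[of r] unfolding c_def S_def by blast
  have e1: "e 1 = 3" using ek_1 assms(1) e_def by simp
  have e2: "e m \<ge> 2" "e m \<le> 3" for m unfolding e_def by (rule ek_ge2, rule ek_le3)
  have Sfin: "finite S" "1 \<notin> S" "card S = r" unfolding S_def by auto
  have T'eq: "T' = add_mset 1 TS" unfolding T'_def TS_def using Sfin by simp
  have e'eq: "e' = (sub e TS)(1 := sub e TS 1 - 1)"
    unfolding e'_def T'eq sub_single[symmetric] sub_add by (simp add: add.commute)
  have subTS1: "sub e TS 1 = 3" using e1 Sfin by (simp add: sub_def TS_def count_mset_set')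
  have cnt: "count T' m \<le> 1" "count V1 m \<le> 1" "count V2 m \<le> 1" for m
    unfolding T'_def V1_def V2_def by (rule count_mset_set_le1)+
  interpret m13: mult13 e'
  proof
    fix m :: nat assume "1 \<le> m"
    show "1 \<le> e' m \<and> e' m \<le> 3" using e2[of m] cnt(1)[of m] unfolding e'_def sub_def by auto
  qed
  have c0: "c > 0" unfolding c_def by simp
  define K where "K = cabs R1 * of_nat (\<Prod>b\<in>#V1. b) + cabs R2 * of_nat (\<Prod>b\<in>#V2. b)"
  have K0: "K \<ge> 0" unfolding K_def using cabs_nonneg by (intro add_nonneg_nonneg mult_nonneg_nonneg) auto
  define \<epsilon> where "\<epsilon> = c / (2 * (K + 1))"
  have eps0: "\<epsilon> > 0" unfolding \<epsilon>_def using c0 K0 by simp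
  have Keps: "K * \<epsilon> \<le> c / 2"
  proof -
    have "K * \<epsilon> = (c / 2) * (K / (K + 1))" unfolding \<epsilon>_def using K0 by (simp add: field_simps)
    also have "\<dots> \<le> (c / 2) * 1" using K0 c0 by (intro mult_left_mono) auto
    finally show ?thesis by simp
  qed
  obtain n0 where n0: "\<And>n. n \<ge> n0 \<Longrightarrow> G e' n $ n \<le> \<epsilon> * (\<Sum>i=0..n. G e' i $ i)"
    using m13.cum_small[OF eps0] by blast
  show ?thesis
  proof (rule eventually_sequentiallyI[of n0])
    fix n assume n: "n \<ge> n0"
    define m where "m = n + r"
    define N where "N = m + M0"
    have mN: "m \<le> N" "1 \<le> N" "M0 \<le> N" unfolding N_def M0_def by auto
    have bS: "1 \<le> b \<and> b \<le> N" if "b \<in> S" for b using that mN unfolding S_def M0_def by auto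
    have bU1: "1 \<le> b \<and> b \<le> N" if "b \<in> U1 r" for b using U1_bounds[OF that] mN unfolding M0_def by auto
    have bU2: "1 \<le> b \<and> b \<le> N" if "b \<in> U2 r" for b using U2_bounds[OF that] mN unfolding M0_def by auto
    have e_pos: "1 \<le> e m" for m using e2[of m] by simp
    have finU: "finite (U1 r)" "finite (U2 r)" unfolding U1_def U2_def by auto
    have decomp: "(1 - fps_X) ^ r * G e N = fps_const c * G (sub e TS) N
        + fps_of_poly R1 * G (sub e V1) N + fps_of_poly R2 * G (sub e V2) N"
    proof -
      have "(1 - fps_X) ^ r * G e N = fps_const c * ((\<Prod>a\<in>S. 1 - fps_X ^ a) * G e N)
         + fps_of_poly R1 * ((\<Prod>b\<in>U1 r. 1 - fps_X ^ b) * G e N) + fps_of_poly R2 * ((\<Prod>b\<in>U2 r. 1 - fps_X ^ b) * G e N)"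
        unfolding R by (simp only: distrib_right mult.assoc)
      also have "(\<Prod>a\<in>S. 1 - fps_X ^ a) * G e N = G (sub e TS) N"
        unfolding TS_def by (rule G_remove_set[OF Sfin(1) bS e_pos])
      also have "(\<Prod>a\<in>U1 r. 1 - fps_X ^ a) * G e N = G (sub e V1) N"
        unfolding V1_def by (rule G_remove_set[OF finU(1) bU1 e_pos])
      also have "(\<Prod>a\<in>U2 r. 1 - fps_X ^ a) * G e N = G (sub e V2) N"
        unfolding V2_def by (rule G_remove_set[OF finU(2) bU2 e_pos])
      finally show ?thesis .
    qed
    define W where "W i = G e' i $ i" for i
    have Wnn: "W i \<ge> 0" for i unfolding W_def using nn_G unfolding nn_def by blast
    have gS: "G (sub e TS) N $ m = (\<Sum>i=0..m. W i)"
      unfolding W_def e'eq by (rule cum_eq) (use subTS1 mN in auto)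
    have gT': "G (sub e T') N $ m = W m"
      unfolding W_def e'_def using mN by (intro G_stable) auto
    have exch: "G (sub e V) N $ m \<le> of_nat (\<Prod>b\<in>#V. b) * W m"
      if V: "V = V1 \<or> V = V2" for V
    proof -
      have "G (sub e V) N $ m \<le> of_nat (\<Prod>b\<in>#V. b) * G (sub e T') N $ m"
      proof (rule exch_chain)
        show "size V = size T'"
          using V Sfin card_U1 card_U2 unfolding V1_def V2_def T'_def by auto
        show "3 \<le> e 1" using e1 by simp
        show "1 \<notin># V" using V U1_bounds[of 1 r] U2_bounds[of 1 r] finU unfolding V1_def V2_def by auto
        show "count T' 1 \<le> 1" by (rule cnt)
        show "count V m + count T' m \<le> e m" if "m \<ge> 2" for m
          using V cnt[of m] e2[of m] by auto
        show "1 \<le> b \<and> b \<le> N" if "b \<in># V" for b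
          using V that finU bU1 bU2 unfolding V1_def V2_def by auto
        show "1 \<le> b \<and> b \<le> N" if "b \<in># T'" for b
          using that Sfin bS mN unfolding T'_def by auto
      qed
      then show ?thesis using gT' by simp
    qed
    have incrV: "incr (G (sub e V) N)" if "V = V1 \<or> V = V2" for V
    proof (rule incr_G)
      have "1 \<notin># V" using that U1_bounds[of 1 r] U2_bounds[of 1 r] finU unfolding V1_def V2_def by auto
      then show "1 \<le> sub e V 1" using e1 by (simp add: sub_def not_in_iff)
    qed (use mN in auto)
    have r1: "\<bar>(fps_of_poly R1 * G (sub e V1) N) $ m\<bar> \<le> cabs R1 * (of_nat (\<Prod>b\<in>#V1. b) * W m)"
    proof -
      have "\<bar>(fps_of_poly R1 * G (sub e V1) N) $ m\<bar> \<le> cabs R1 * G (sub e V1) N $ m"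
        by (rule remainder_bound[OF nn_G incrV]) simp
      also have "\<dots> \<le> cabs R1 * (of_nat (\<Prod>b\<in>#V1. b) * W m)"
        by (intro mult_left_mono exch cabs_nonneg) simp
      finally show ?thesis .
    qed
    have r2: "\<bar>(fps_of_poly R2 * G (sub e V2) N) $ m\<bar> \<le> cabs R2 * (of_nat (\<Prod>b\<in>#V2. b) * W m)"
    proof -
      have "\<bar>(fps_of_poly R2 * G (sub e V2) N) $ m\<bar> \<le> cabs R2 * G (sub e V2) N $ m"
        by (rule remainder_bound[OF nn_G incrV]) simp
      also have "\<dots> \<le> cabs R2 * (of_nat (\<Prod>b\<in>#V2. b) * W m)"
        by (intro mult_left_mono exch cabs_nonneg) simp
      finally show ?thesis .
    qed
    define u where "u = ((1 - fps_X) ^ r * G e N) $ m"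
    have u_eq: "u = c * (\<Sum>i=0..m. W i) + (fps_of_poly R1 * G (sub e V1) N) $ m
        + (fps_of_poly R2 * G (sub e V2) N) $ m"
      unfolding u_def decomp gS[symmetric] by simp
    have u_low: "u \<ge> c * (\<Sum>i=0..m. W i) - K * W m"
      using u_eq r1 r2 unfolding K_def by (simp add: algebra_simps)
    have Wm: "W m \<le> \<epsilon> * (\<Sum>i=0..m. W i)" unfolding W_def using n0[of m] n unfolding m_def by auto
    have cum_pos: "(\<Sum>i=0..m. W i) \<ge> 1"
    proof -
      have "W 0 = 1" unfolding W_def by (simp add: G_def)
      moreover have "W 0 \<le> (\<Sum>i=0..m. W i)" by (rule member_le_sum) (use Wnn in auto)
      ultimately show ?thesis by simp
    qed
    have "K * W m \<le> K * (\<epsilon> * (\<Sum>i=0..m. W i))" by (rule mult_left_mono[OF Wm K0])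
    also have "\<dots> = (K * \<epsilon>) * (\<Sum>i=0..m. W i)" by simp
    also have "\<dots> \<le> (c / 2) * (\<Sum>i=0..m. W i)" by (rule mult_right_mono[OF Keps]) (use cum_pos in auto)
    finally have "u \<ge> (c / 2) * (\<Sum>i=0..m. W i)" using u_low by (simp add: algebra_simps)
    moreover have "(c / 2) * (\<Sum>i=0..m. W i) > 0" using c0 cum_pos by simp
    ultimately have upos: "u > 0" by linarith
    have "u = (\<Sum>i = 0..r. of_nat (r choose i) * (-1) ^ (r + i) * G e N $ (n + i))"
      unfolding u_def m_def by (rule binom_coeff)
    also have "\<dots> = (\<Sum>i = 0..r. of_nat (r choose i) * (-1) ^ (r + i) * Delta k (n + i))"
    proof (rule sum.cong[OF refl])
      fix i assume "i \<in> {0..r}"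
      then have "n + i \<le> N" unfolding N_def m_def by auto
      then have "G e N $ (n + i) = Delta k (n + i)" unfolding e_def Delta_G by (rule G_stable)
      then show "of_nat (r choose i) * (-1) ^ (r + i) * G e N $ (n + i)
          = of_nat (r choose i) * (-1) ^ (r + i) * Delta k (n + i)" by simp
    qed
    finally show "(\<Sum>i = 0..r. of_nat (r choose i) * (-1) ^ (r + i) * Delta k (n + i)) > 0"
      using upos by simp
  qed
qed


end
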